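(* Let $G$ be a finitely generated group with uniformly $\alpha$-almost flat coset spaces, and let $H$ be a finite-index subgroup of $G$. Then $H$ has uniformly $\alpha$-almost flat coset spaces.
   Context: For a finitely generated group $L$ with finite symmetric generating set $X$ containing the identity, $X^n=\{x_1\cdots x_n:x_i\in X\}$ and for a finite-index subgroup $M\le L$, $\operatorname{diam}_X(L/M)=\min\{n\in\mathbb{N}:X^nM=L\}$. $L$ has uniformly $\alpha$-almost flat coset spaces ($\alpha\in(0,1]$) if there exists $\varepsilon>0$ with $\operatorname{diam}_X(L/M)\ge\varepsilon[L:M]^\alpha$ for every finite-index subgroup $M\le L$; this does not depend on the choice of $X$. (A finite-index subgroup of a finitely generated group is finitely generated.) *)

theory Defs
  imports "HOL-Algebra.Algebra" Complex_Main
begin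

definition fin_sym_gen_set :: "('a, 'b) monoid_scheme \<Rightarrow> 'a set \<Rightarrow> bool" where
  "fin_sym_gen_set Gp S \<longleftrightarrow> S \<subseteq> carrier Gp \<and> finite S \<and> monoid.one Gp \<in> S \<and>
     (\<forall>x\<in>S. m_inv Gp x \<in> S) \<and> generate Gp S = carrier Gp"

fun set_pow :: "('a, 'b) monoid_scheme \<Rightarrow> 'a set \<Rightarrow> nat \<Rightarrow> 'a set" where
  "set_pow Gp S 0 = {monoid.one Gp}"
| "set_pow Gp S (Suc n) = set_mult Gp S (set_pow Gp S n)"

definition coset_diam :: "('a, 'b) monoid_scheme \<Rightarrow> 'a set \<Rightarrow> 'a set \<Rightarrow> nat" where
  "coset_diam Gp S M = (LEAST n. n \<ge> 1 \<and> set_mult Gp (set_pow Gp S n) M = carrier Gp)"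

text \<open>Index [Gp:M] as the number of right cosets (meaningful when finite).\<close>
definition group_index :: "('a, 'b) monoid_scheme \<Rightarrow> 'a set \<Rightarrow> nat" where
  "group_index Gp M = card (RCOSETS Gp M)"

definition finite_index_subgroup :: "'a set \<Rightarrow> ('a, 'b) monoid_scheme \<Rightarrow> bool" where
  "finite_index_subgroup M Gp \<longleftrightarrow> subgroup M Gp \<and> finite (RCOSETS Gp M)"

definition finitely_generated_group :: "('a, 'b) monoid_scheme \<Rightarrow> bool" where
  "finitely_generated_group Gp \<longleftrightarrow> group Gp \<and> (\<exists>S. fin_sym_gen_set Gp S)"

text \<open>Uniformly alpha-almost flat coset spaces: Gp is finitely generated and for
  (any, equivalently some) finite symmetric generating set S containing 1 there is
  eps > 0 with diam_X(Gp/M) >= eps [Gp:M]^alpha for all finite-index subgroups M.\<close>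
definition unif_almost_flat :: "('a, 'b) monoid_scheme \<Rightarrow> real \<Rightarrow> bool" where
  "unif_almost_flat Gp \<alpha> \<longleftrightarrow> finitely_generated_group Gp \<and>
     (\<forall>S. fin_sym_gen_set Gp S \<longrightarrow>
        (\<exists>\<epsilon>>0. \<forall>M. finite_index_subgroup M Gp \<longrightarrow>
            real (coset_diam Gp S M) \<ge> \<epsilon> * real (group_index Gp M) powr \<alpha>))"

end

theory Submission
  imports Defs
begin


lemma set_pow_sub: "set_pow (G\<lparr>carrier := H\<rparr>) S n = set_pow G S n"
  by (induction n) (auto simp: set_mult_def)

lemma set_mult_sub: "set_mult (G\<lparr>carrier := H\<rparr>) A B = set_mult G A B"
  by (simp add: set_mult_def)

lemma r_coset_sub: "r_coset (G\<lparr>carrier := H\<rparr>) A b = r_coset G A b"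
  by (simp add: r_coset_def)

lemma RCOSETS_sub: "RCOSETS (G\<lparr>carrier := H\<rparr>) M = (\<Union>a\<in>H. {r_coset G M a})"
  by (simp add: RCOSETS_def r_coset_def)

context group begin

lemma set_pow_carrier: "S \<subseteq> carrier G \<Longrightarrow> set_pow G S n \<subseteq> carrier G"
  by (induction n) (auto simp: set_mult_def)

lemma set_pow_SucI: "y \<in> S \<Longrightarrow> g \<in> set_pow G S n \<Longrightarrow> y \<otimes> g \<in> set_pow G S (Suc n)"
  by (auto simp: set_mult_def)

lemma set_pow_SucE: "x \<in> set_pow G S (Suc n) \<Longrightarrow> (\<And>y g. y \<in> S \<Longrightarrow> g \<in> set_pow G S n \<Longrightarrow> x = y \<otimes> g \<Longrightarrow> P) \<Longrightarrow> P"
  by (auto simp: set_mult_def)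

lemma set_pow_mono_S: "S \<subseteq> S' \<Longrightarrow> set_pow G S n \<subseteq> set_pow G S' n"
  by (induction n) (auto simp: set_mult_def)

lemma set_pow_step: "S \<subseteq> carrier G \<Longrightarrow> \<one> \<in> S \<Longrightarrow> set_pow G S n \<subseteq> set_pow G S (Suc n)"
proof
  fix x assume "S \<subseteq> carrier G" "\<one> \<in> S" "x \<in> set_pow G S n"
  moreover have "x \<in> carrier G" using set_pow_carrier calculation by blast
  ultimately show "x \<in> set_pow G S (Suc n)" using set_pow_SucI[of \<one> S x n] by simp
qed

lemma set_pow_mono_n: "S \<subseteq> carrier G \<Longrightarrow> \<one> \<in> S \<Longrightarrow> k \<le> n \<Longrightarrow> set_pow G S k \<subseteq> set_pow G S n"
proof (induction n)
  case 0 then show ?case by simp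
next
  case (Suc n)
  then show ?case using set_pow_step[of S n] by (cases "k = Suc n") auto
qed

lemma set_pow_mult: "S \<subseteq> carrier G \<Longrightarrow> a \<in> set_pow G S i \<Longrightarrow> b \<in> set_pow G S j \<Longrightarrow> a \<otimes> b \<in> set_pow G S (i + j)"
proof (induction i arbitrary: a)
  case 0
  then have "b \<in> carrier G" using set_pow_carrier by blast
  with 0 show ?case by simp
next
  case (Suc i)
  from Suc.prems(2) obtain y g where yg: "y \<in> S" "g \<in> set_pow G S i" "a = y \<otimes> g" by (rule set_pow_SucE)
  have c: "y \<in> carrier G" "g \<in> carrier G" "b \<in> carrier G"
    using yg Suc.prems set_pow_carrier by blast+
  have "a \<otimes> b = y \<otimes> (g \<otimes> b)" using yg c by (simp add: m_assoc)
  moreover have "g \<otimes> b \<in> set_pow G S (i + j)" using Suc yg by blast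
  ultimately show ?case using set_pow_SucI yg by simp
qed

lemma generate_sub_pow:
  assumes "S \<subseteq> carrier G" "\<one> \<in> S" "\<forall>x\<in>S. inv x \<in> S"
  shows "generate G S \<subseteq> (\<Union>n. set_pow G S n)"
proof
  fix x assume "x \<in> generate G S"
  then show "x \<in> (\<Union>n. set_pow G S n)"
  proof induction
    case one then show ?case by (auto intro: exI[of _ 0])
  next
    case (incl h)
    then have "h \<otimes> \<one> \<in> set_pow G S 1" using set_pow_SucI[of h S \<one> 0] by simp
    then have "h \<in> set_pow G S 1" using incl assms by auto
    then show ?case by blast
  next
    case (inv h)
    then have "inv h \<otimes> \<one> \<in> set_pow G S 1" using assms set_pow_SucI[of "inv h" S \<one> 0] by simp
    then have "inv h \<in> set_pow G S 1" using inv assms by auto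
    then show ?case by blast
  next
    case (eng a b)
    then show ?case using set_pow_mult[OF assms(1)] by blast
  qed
qed

lemma rcoset_reps:
  assumes "subgroup K G" "finite (rcosets K)"
  shows "\<exists>R. finite R \<and> R \<subseteq> carrier G \<and> (\<forall>g\<in>carrier G. \<exists>r\<in>R. \<exists>k\<in>K. g = k \<otimes> r)"
proof -
  define f where "f C = (SOME r. r \<in> carrier G \<and> C = K #> r)" for C
  have f: "f C \<in> carrier G \<and> C = K #> f C" if "C \<in> rcosets K" for C
    unfolding f_def by (rule someI_ex) (use that in \<open>auto simp: RCOSETS_def\<close>)
  show ?thesis
  proof (intro exI conjI ballI)
    show "finite (f ` (rcosets K))" using assms by simp
    show "f ` (rcosets K) \<subseteq> carrier G" using f by blast
    fix g assume g: "g \<in> carrier G"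
    then have C: "K #> g \<in> rcosets K" by (auto simp: RCOSETS_def)
    then have "g \<in> K #> f (K #> g)" using f[OF C] rcos_self[OF g assms(1)] by simp
    then show "\<exists>r\<in>f ` (rcosets K). \<exists>k\<in>K. g = k \<otimes> r" using C by (auto simp: r_coset_def)
  qed
qed

end

context group begin

lemma schreier:
  assumes sub: "subgroup H G" and fin: "finite (rcosets H)" and S: "fin_sym_gen_set G S"
  shows "\<exists>XX. fin_sym_gen_set (G\<lparr>carrier := H\<rparr>) XX"
proof -
  have Sc: "S \<subseteq> carrier G" "finite S" "\<one> \<in> S" "\<forall>x\<in>S. inv x \<in> S" "generate G S = carrier G"
    using S by (auto simp: fin_sym_gen_set_def)
  have Hc: "H \<subseteq> carrier G" using sub subgroup.subset by blast
  define f where "f C = (if C = H then \<one> else SOME r. r \<in> carrier G \<and> C = H #> r)" for C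
  have f: "f C \<in> carrier G \<and> C = H #> f C" if CR: "C \<in> rcosets H" for C
  proof (cases "C = H")
    case True then show ?thesis using Hc by (simp add: f_def)
  next
    case False
    obtain r where r: "r \<in> carrier G" "C = H #> r" using CR by (auto simp: RCOSETS_def)
    then have ex: "\<exists>r. r \<in> carrier G \<and> C = H #> r" by blast
    have e: "f C = (SOME r. r \<in> carrier G \<and> C = H #> r)" using False by (simp add: f_def)
    show ?thesis unfolding e by (rule someI_ex[OF ex])
  qed
  define rep where "rep g = f (H #> g)" for g
  define T where "T = f ` (rcosets H)"
  have finT: "finite T" using fin by (simp add: T_def)
  have repT: "rep g \<in> T" and repc: "rep g \<in> carrier G" and repH: "g \<otimes> inv (rep g) \<in> H"
    and repeq: "H #> rep g = H #> g"
    if g: "g \<in> carrier G" for g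
  proof -
    have C: "H #> g \<in> rcosets H" using g by (auto simp: RCOSETS_def)
    show "rep g \<in> T" using C by (simp add: rep_def T_def)
    show rc: "rep g \<in> carrier G" using f[OF C] by (simp add: rep_def)
    show e: "H #> rep g = H #> g" using f[OF C] by (simp add: rep_def)
    have "g \<in> H #> rep g" using e rcos_self[OF g sub] by simp
    then show "g \<otimes> inv (rep g) \<in> H" using subgroup.rcos_module_imp[OF sub is_group rc] by blast
  qed
  have Tc: "T \<subseteq> carrier G" using f by (auto simp: T_def)
  have repid: "rep t = t" if tT: "t \<in> T" for t
  proof -
    obtain C where C: "C \<in> rcosets H" "t = f C" using tT unfolding T_def by blast
    then show ?thesis using f[OF C(1)] by (simp add: rep_def)
  qed
  have rep1: "rep h = \<one>" if "h \<in> H" for h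
    using subgroup.rcos_const[OF sub is_group that] by (simp add: rep_def f_def)
  define X0 where "X0 = (\<lambda>(t, y). t \<otimes> y \<otimes> inv (rep (t \<otimes> y))) ` (T \<times> S)"
  define XX where "XX = X0 \<union> (\<lambda>x. inv x) ` X0 \<union> {\<one>}"
  have X0H: "X0 \<subseteq> H"
    using Tc Sc(1) repH by (auto simp: X0_def intro!: repH)
  have XXH: "XX \<subseteq> H" using X0H sub by (auto simp: XX_def subgroup.m_inv_closed subgroup.one_closed)
  have finX: "finite XX" using finT Sc(2) by (simp add: XX_def X0_def)
  define Hs where "Hs = G\<lparr>carrier := H\<rparr>"
  have genX: "generate Hs XX = generate G XX" unfolding Hs_def by (rule generate_consistent[OF XXH sub])
  have key: "\<forall>g\<in>set_pow G S n. \<forall>t\<in>T. t \<otimes> g \<otimes> inv (rep (t \<otimes> g)) \<in> generate G XX" for n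
  proof (induction n)
    case 0
    have "t \<otimes> inv t \<in> generate G XX" if "t \<in> T" for t
      using that Tc by (metis r_inv subsetD generate.one)
    then show ?case
    proof (intro ballI)
      fix g t assume g: "g \<in> set_pow G S 0" and t: "t \<in> T"
      have "t \<in> carrier G" using t Tc by blast
      then show "t \<otimes> g \<otimes> inv (rep (t \<otimes> g)) \<in> generate G XX"
        using g t repid \<open>\<And>t. t \<in> T \<Longrightarrow> t \<otimes> inv t \<in> generate G XX\<close> generate.one[of G XX] by simp
    qed
  next
    case (Suc n)
    show ?case
    proof (intro ballI)
      fix x t assume x: "x \<in> set_pow G S (Suc n)" and t: "t \<in> T"
      obtain y g where yg: "y \<in> S" "g \<in> set_pow G S n" "x = y \<otimes> g" using x by (rule set_pow_SucE)
      have c: "y \<in> carrier G" "g \<in> carrier G" "t \<in> carrier G" using yg Sc(1) set_pow_carrier t Tc by blast+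
      define a where "a = rep (t \<otimes> y)"
      have ac: "a \<in> carrier G" "a \<in> T" using repc repT c by (simp_all add: a_def)
      have e: "rep (a \<otimes> g) = rep (t \<otimes> x)"
      proof -
        have "H #> (a \<otimes> g) = (H #> a) #> g" using coset_mult_assoc Hc ac c by simp
        also have "\<dots> = (H #> (t \<otimes> y)) #> g" using repeq c by (simp add: a_def)
        also have "\<dots> = H #> (t \<otimes> x)" using coset_mult_assoc Hc c yg by (simp add: m_assoc)
        finally show ?thesis by (simp add: rep_def)
      qed
      have b: "rep (t \<otimes> x) \<in> carrier G" using repc c yg by simp
      have p1: "t \<otimes> y \<otimes> inv a \<in> generate G XX"
        using t yg by (intro generate.incl) (auto simp: XX_def X0_def a_def)
      have p2: "a \<otimes> g \<otimes> inv (rep (t \<otimes> x)) \<in> generate G XX" using Suc ac yg e by metis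
      have "t \<otimes> x \<otimes> inv (rep (t \<otimes> x)) = (t \<otimes> y \<otimes> inv a) \<otimes> (a \<otimes> g \<otimes> inv (rep (t \<otimes> x)))"
      proof -
        have cancel: "inv a \<otimes> (a \<otimes> z) = z" if "z \<in> carrier G" for z
          using ac that by (simp add: m_assoc[symmetric])
        show ?thesis using c ac b yg by (simp add: m_assoc cancel)
      qed
      then show "t \<otimes> x \<otimes> inv (rep (t \<otimes> x)) \<in> generate G XX"
        using p1 p2 generate.eng by metis
    qed
  qed
  have "H \<subseteq> generate G XX"
  proof
    fix h assume h: "h \<in> H"
    then have hc: "h \<in> carrier G" using Hc by blast
    then obtain n where n: "h \<in> set_pow G S n" using generate_sub_pow[OF Sc(1,3,4)] Sc(5) by blast
    have oneT: "\<one> \<in> T" using f[of H] Hc unfolding T_def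
      by (metis coset_mult_one image_eqI one_closed rcosetsI f_def)
    have "\<one> \<otimes> h \<otimes> inv (rep (\<one> \<otimes> h)) \<in> generate G XX" using key[of n] n oneT by blast
    then show "h \<in> generate G XX" using hc rep1[OF h] by simp
  qed
  moreover have "generate G XX \<subseteq> H" by (rule generate_subgroup_incl[OF XXH sub])
  ultimately have gen: "generate Hs XX = H" using genX by blast
  have sym: "inv\<^bsub>Hs\<^esub> x \<in> XX" if "x \<in> XX" for x
  proof -
    have "inv\<^bsub>Hs\<^esub> x = inv x" using that XXH m_inv_consistent[OF sub, of x] unfolding Hs_def by blast
    moreover have "inv x \<in> XX"
    proof -
      have "x \<in> X0 \<or> (\<exists>x0\<in>X0. x = inv x0) \<or> x = \<one>" using that unfolding XX_def by blast
      moreover have "\<And>x0. x0 \<in> X0 \<Longrightarrow> x0 \<in> carrier G" using X0H Hc by blast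
      ultimately show ?thesis unfolding XX_def by auto
    qed
    ultimately show ?thesis by simp
  qed
  have "fin_sym_gen_set Hs XX"
    unfolding fin_sym_gen_set_def using XXH finX sym gen by (simp add: Hs_def XX_def)
  then show ?thesis unfolding Hs_def by blast
qed

end

context group begin

lemma left_reps:
  assumes "subgroup K G" "finite (rcosets K)"
  shows "\<exists>R. finite R \<and> R \<subseteq> carrier G \<and> (\<forall>g\<in>carrier G. \<exists>r\<in>R. \<exists>k\<in>K. g = inv r \<otimes> k)"
proof -
  obtain R where R: "finite R" "R \<subseteq> carrier G" "\<forall>g\<in>carrier G. \<exists>r\<in>R. \<exists>k\<in>K. g = k \<otimes> r"
    using rcoset_reps[OF assms] by blast
  have "\<exists>r\<in>R. \<exists>k\<in>K. g = inv r \<otimes> k" if g: "g \<in> carrier G" for g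
  proof -
    obtain r k where rk: "r \<in> R" "k \<in> K" "inv g = k \<otimes> r" using R(3) g by (meson inv_closed)
    have c: "r \<in> carrier G" "k \<in> carrier G" using rk R(2) subgroup.subset[OF assms(1)] by blast+
    have "g = inv (k \<otimes> r)" using rk(3) g by (metis inv_inv)
    also have "\<dots> = inv r \<otimes> inv k" using c by (simp add: inv_mult_group)
    finally show ?thesis using rk subgroup.m_inv_closed[OF assms(1)] by blast
  qed
  then show ?thesis using R by blast
qed

lemma flat_sub:
  assumes sub: "subgroup H G" and fin: "finite (rcosets H)"
    and QS: "fin_sym_gen_set (G\<lparr>carrier := H\<rparr>) Q"
    and flat: "\<forall>S. fin_sym_gen_set G S \<longrightarrow> (\<exists>\<epsilon>>0. \<forall>M. finite_index_subgroup M G \<longrightarrow>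
            real (coset_diam G S M) \<ge> \<epsilon> * real (group_index G M) powr \<alpha>)"
    and alpha: "\<alpha> > 0"
  shows "\<exists>\<epsilon>>0. \<forall>M. finite_index_subgroup M (G\<lparr>carrier := H\<rparr>) \<longrightarrow>
            real (coset_diam (G\<lparr>carrier := H\<rparr>) Q M) \<ge> \<epsilon> * real (group_index (G\<lparr>carrier := H\<rparr>) M) powr \<alpha>"
proof -
  interpret HG: group "G\<lparr>carrier := H\<rparr>" by (rule subgroup_imp_group[OF sub])
  have Hc: "H \<subseteq> carrier G" using sub subgroup.subset by blast
  have QH: "Q \<subseteq> H" "finite Q" "\<one> \<in> Q" using QS by (auto simp: fin_sym_gen_set_def)
  have Qc: "Q \<subseteq> carrier G" using QH Hc by blast
  have Qinv: "\<forall>x\<in>Q. inv x \<in> Q" using QS QH(1) m_inv_consistent[OF sub] by (auto simp: fin_sym_gen_set_def subsetD)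
  have genQ: "generate G Q = H" using QS generate_consistent[OF QH(1) sub] by (simp add: fin_sym_gen_set_def)
  obtain R where R: "finite R" "R \<subseteq> carrier G" "\<forall>g\<in>carrier G. \<exists>r\<in>R. \<exists>k\<in>H. g = inv r \<otimes> k"
    using left_reps[OF sub fin] by blast
  obtain R2 where R2: "finite R2" "R2 \<subseteq> carrier G" "\<forall>g\<in>carrier G. \<exists>r\<in>R2. \<exists>k\<in>H. g = k \<otimes> r"
    using rcoset_reps[OF sub fin] by blast
  define Y where "Y = Q \<union> R \<union> (\<lambda>x. inv x) ` R"
  have Yc: "Y \<subseteq> carrier G" using Qc R(2) by (auto simp: Y_def)
  have YS: "fin_sym_gen_set G Y"
  proof -
    have "finite Y" using QH R by (simp add: Y_def)
    moreover have "\<forall>x\<in>Y. inv x \<in> Y" using Qinv R(2) by (auto simp: Y_def subsetD)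
    moreover have "generate G Y = carrier G"
    proof
      show "generate G Y \<subseteq> carrier G" by (rule generate_incl[OF Yc])
      show "carrier G \<subseteq> generate G Y"
      proof
        fix g assume "g \<in> carrier G"
        then obtain r k where rk: "r \<in> R" "k \<in> H" "g = inv r \<otimes> k" using R(3) by blast
        have "inv r \<in> generate G Y" using rk by (intro generate.incl) (auto simp: Y_def)
        moreover have "k \<in> generate G Y" using rk genQ mono_generate[of Q Y] by (auto simp: Y_def)
        ultimately show "g \<in> generate G Y" using rk generate.eng by metis
      qed
    qed
    ultimately show ?thesis using Yc QH by (auto simp: fin_sym_gen_set_def Y_def)
  qed
  obtain \<epsilon> where eps: "\<epsilon> > 0" "\<forall>M. finite_index_subgroup M G \<longrightarrow>
            real (coset_diam G Y M) \<ge> \<epsilon> * real (group_index G M) powr \<alpha>"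
    using flat YS by blast
  show ?thesis
  proof (intro exI[of _ "\<epsilon> / 2"] conjI allI impI)
    show "\<epsilon> / 2 > 0" using eps by simp
    fix M assume "finite_index_subgroup M (G\<lparr>carrier := H\<rparr>)"
    then have subMH: "subgroup M (G\<lparr>carrier := H\<rparr>)" and finMH: "finite (RCOSETS (G\<lparr>carrier := H\<rparr>) M)"
      by (auto simp: finite_index_subgroup_def)
    have MH: "M \<subseteq> H" using subgroup.subset[OF subMH] by simp
    have Mc: "M \<subseteq> carrier G" using MH Hc by blast
    have subM: "subgroup M G"
      using group_incl_imp_subgroup[OF Mc] HG.subgroup_imp_group[OF subMH] by simp
    obtain RM where RM: "finite RM" "RM \<subseteq> H" "\<forall>h\<in>H. \<exists>r\<in>RM. \<exists>m\<in>M. h = m \<otimes> r"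
      using HG.rcoset_reps[OF subMH finMH] by auto
    have finMG: "finite (rcosets M)"
    proof (rule finite_subset)
      show "rcosets M \<subseteq> (\<lambda>(a, b). M #> (a \<otimes> b)) ` (RM \<times> R2)"
      proof
        fix C assume "C \<in> rcosets M"
        then obtain g where g: "g \<in> carrier G" "C = M #> g" by (auto simp: RCOSETS_def)
        obtain r k where rk: "r \<in> R2" "k \<in> H" "g = k \<otimes> r" using R2(3) g by blast
        obtain r' m where rm: "r' \<in> RM" "m \<in> M" "k = m \<otimes> r'" using RM(3) rk by blast
        have c: "r \<in> carrier G" "r' \<in> carrier G" "m \<in> carrier G"
          using rk rm R2(2) RM(2) Hc Mc by blast+
        have "g = m \<otimes> (r' \<otimes> r)" using rk rm c by (simp add: m_assoc)
        then have "g \<in> M #> (r' \<otimes> r)" using rcosI[OF rm(2) Mc] c by simp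
        then have "M #> (r' \<otimes> r) = C" using repr_independence[OF _ _ subM] c g by simp
        then show "C \<in> (\<lambda>(a, b). M #> (a \<otimes> b)) ` (RM \<times> R2)" using rk rm by force
      qed
      show "finite ((\<lambda>(a, b). M #> (a \<otimes> b)) ` (RM \<times> R2))" using RM R2 by simp
    qed
    have fiM: "finite_index_subgroup M G" using subM finMG by (simp add: finite_index_subgroup_def)
    have idx: "group_index (G\<lparr>carrier := H\<rparr>) M \<le> group_index G M"
      unfolding group_index_def
      by (rule card_mono[OF finMG]) (use Hc in \<open>auto simp: RCOSETS_sub RCOSETS_def\<close>)
    obtain RL where RL: "finite RL" "RL \<subseteq> H" "\<forall>h\<in>H. \<exists>r\<in>RL. \<exists>m\<in>M. h = inv r \<otimes> m"
      using HG.left_reps[OF subMH finMH] m_inv_consistent[OF sub] by (auto simp: subsetD)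
    have "\<forall>r\<in>RL. \<exists>n. inv r \<in> set_pow G Q n"
      using generate_sub_pow[OF Qc QH(3) Qinv] genQ RL(2) subgroup.m_inv_closed[OF sub] by blast
    then obtain nf where nf: "\<forall>r\<in>RL. inv r \<in> set_pow G Q (nf r)" by metis
    define N where "N = Suc (Max (nf ` RL))"
    have QpH: "set_pow G Q n \<subseteq> H" for n
      using HG.set_pow_carrier[of Q n] QH by (simp add: set_pow_sub)
    have exN: "N \<ge> 1 \<and> set_mult (G\<lparr>carrier := H\<rparr>) (set_pow (G\<lparr>carrier := H\<rparr>) Q N) M = carrier (G\<lparr>carrier := H\<rparr>)"
    proof -
      have "set_mult G (set_pow G Q N) M = H"
      proof
        show "set_mult G (set_pow G Q N) M \<subseteq> H"
          using QpH[of N] MH subgroup.m_closed[OF sub] by (auto simp: set_mult_def)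
        show "H \<subseteq> set_mult G (set_pow G Q N) M"
        proof
          fix h assume "h \<in> H"
          then obtain r m where rm: "r \<in> RL" "m \<in> M" "h = inv r \<otimes> m" using RL(3) by blast
          have "nf r \<le> N" using rm RL(1) by (simp add: N_def le_SucI)
          then have "inv r \<in> set_pow G Q N" using set_pow_mono_n[OF Qc QH(3)] nf rm by blast
          then show "h \<in> set_mult G (set_pow G Q N) M" using rm by (auto simp: set_mult_def)
        qed
      qed
      then show ?thesis by (simp add: N_def set_mult_sub set_pow_sub)
    qed
    define d where "d = coset_diam (G\<lparr>carrier := H\<rparr>) Q M"
    have hd: "d \<ge> 1 \<and> set_mult (G\<lparr>carrier := H\<rparr>) (set_pow (G\<lparr>carrier := H\<rparr>) Q d) M = carrier (G\<lparr>carrier := H\<rparr>)"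
      unfolding d_def coset_diam_def by (rule LeastI[of _ N]) (use exN in simp)
    then have hd': "set_mult G (set_pow G Q d) M = H" by (simp add: set_mult_sub set_pow_sub)
    have "set_mult G (set_pow G Y (Suc d)) M = carrier G"
    proof
      show "set_mult G (set_pow G Y (Suc d)) M \<subseteq> carrier G"
        using set_pow_carrier[OF Yc, of "Suc d"] Mc by (auto simp: set_mult_def)
      show "carrier G \<subseteq> set_mult G (set_pow G Y (Suc d)) M"
      proof
        fix g assume "g \<in> carrier G"
        then obtain r k where rk: "r \<in> R" "k \<in> H" "g = inv r \<otimes> k" using R(3) by blast
        then obtain x m where xm: "x \<in> set_pow G Q d" "m \<in> M" "k = x \<otimes> m"
          using hd' by (auto simp: set_mult_def)
        have c: "inv r \<in> carrier G" "x \<in> carrier G" "m \<in> carrier G"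
          using rk R(2) xm QpH Hc Mc by blast+
        have "inv r \<otimes> x \<in> set_pow G Y (Suc d)"
          using set_pow_SucI[of "inv r" Y x d] set_pow_mono_S[of Q Y d] rk xm by (auto simp: Y_def)
        moreover have "g = (inv r \<otimes> x) \<otimes> m" using rk xm c by (simp add: m_assoc)
        ultimately show "g \<in> set_mult G (set_pow G Y (Suc d)) M" using xm unfolding set_mult_def by blast
      qed
    qed
    then have cd: "coset_diam G Y M \<le> Suc d"
      unfolding coset_diam_def by (intro Least_le) simp
    have "\<epsilon> * real (group_index G M) powr \<alpha> \<le> real (coset_diam G Y M)" using eps fiM by blast
    also have "\<dots> \<le> 2 * real d" using cd hd by linarith
    finally have A: "\<epsilon> * real (group_index G M) powr \<alpha> \<le> 2 * real d" .
    have "real (group_index (G\<lparr>carrier := H\<rparr>) M) powr \<alpha> \<le> real (group_index G M) powr \<alpha>"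
      using idx alpha by (intro powr_mono2) auto
    then have "\<epsilon> * real (group_index (G\<lparr>carrier := H\<rparr>) M) powr \<alpha> \<le> \<epsilon> * real (group_index G M) powr \<alpha>"
      using eps by (intro mult_left_mono) auto
    with A show "\<epsilon> / 2 * real (group_index (G\<lparr>carrier := H\<rparr>) M) powr \<alpha> \<le> real (coset_diam (G\<lparr>carrier := H\<rparr>) Q M)"
      by (simp add: d_def)
  qed
qed

end

theorem lemma2p5:
  fixes G :: "('a, 'b) monoid_scheme" and H :: "'a set" and \<alpha> :: real
  assumes "group G"
    and "finitely_generated_group G"
    and "0 < \<alpha>" and "\<alpha> \<le> 1"
    and "unif_almost_flat G \<alpha>"
    and "finite_index_subgroup H G"
  shows "unif_almost_flat (G\<lparr>carrier := H\<rparr>) \<alpha>"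
proof -
  have sub: "subgroup H G" and fin: "finite (RCOSETS G H)"
    using assms(6) by (auto simp: finite_index_subgroup_def)
  obtain S where S: "fin_sym_gen_set G S"
    using assms(2) by (auto simp: finitely_generated_group_def)
  have fg: "finitely_generated_group (G\<lparr>carrier := H\<rparr>)"
    unfolding finitely_generated_group_def
    using group.schreier[OF assms(1) sub fin S] group.subgroup_imp_group[OF assms(1) sub] by blast
  have flat: "\<forall>S. fin_sym_gen_set G S \<longrightarrow> (\<exists>\<epsilon>>0. \<forall>M. finite_index_subgroup M G \<longrightarrow>
            real (coset_diam G S M) \<ge> \<epsilon> * real (group_index G M) powr \<alpha>)"
    using assms(5) by (simp add: unif_almost_flat_def)
  show ?thesis
    unfolding unif_almost_flat_def
    using fg group.flat_sub[OF assms(1) sub fin _ flat assms(3)] by blast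
qed

end
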